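(* Let $f:(\mathbb R^2,q)\to(\mathbb R^3,p)$ be a smooth germ with a corank 1 singularity at $q$ whose curvature parabola $\Delta_p$ is a non-degenerate parabola or a half-line, let $(u,v)$ be a coordinate system with $f_u(q)\ne0$ and $f_v(q)=0$, and let $E=\langle f_u,f_u\rangle$, $F=\langle f_u,f_v\rangle$, $G=\langle f_v,f_v\rangle$ be the coefficients of the first fundamental form. Then, evaluating at $q$, $$\kappa_a(p)=\frac{\big(\frac{E_u}{2}F_v-E(F_{uv}-\frac{E_{vv}}{2})\big)\big(F_v^2-E\frac{G_{vv}}{2}\big)-\big(\frac{E_v}{2}F_v-E\frac{G_{uv}}{2}\big)^2}{\Big(E\big(E\frac{G_{vv}}{2}-F_v^2\big)\Big)^{3/2}},$$ where subscripts denote partial derivatives.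
   Context: $T_pM=\operatorname{im}df_q$, $N_pM$ its orthogonal complement with a fixed orientation. First fundamental form $I(X,Y)=\langle df_qX,df_qY\rangle$; second fundamental form $II$: the symmetric bilinear map $T_q\mathbb R^2\times T_q\mathbb R^2\to N_pM$ with $II(\partial_u,\partial_u)=f_{uu}(q)^\perp$, $II(\partial_u,\partial_v)=f_{uv}(q)^\perp$, $II(\partial_v,\partial_v)=f_{vv}(q)^\perp$ ($\perp$ = orthogonal projection to $N_pM$). Curvature parabola $\Delta_p=\{II(X,X): I(X,X)=1\}\subset N_pM$. Axial vector $v_a$: if $\Delta_p$ is a non-degenerate parabola, the unit vector along its axis of symmetry pointing to its interior; if $\Delta_p$ is a half-line, the unit vector in the direction in which the half-line extends. Axial curvature $\kappa_a(p)=\min\{\langle II(X,X),v_a\rangle: I(X,X)=1\}$. *)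

theory Defs
  imports "HOL-Analysis.Analysis"
begin

definition pd_u :: "(real \<times> real \<Rightarrow> 'a::real_normed_vector) \<Rightarrow> real \<times> real \<Rightarrow> 'a" where
  "pd_u g = (\<lambda>(u,v). vector_derivative (\<lambda>t. g (t, v)) (at u))"

definition pd_v :: "(real \<times> real \<Rightarrow> 'a::real_normed_vector) \<Rightarrow> real \<times> real \<Rightarrow> 'a" where
  "pd_v g = (\<lambda>(u,v). vector_derivative (\<lambda>t. g (u, t)) (at v))"

fun iter_pd :: "bool list \<Rightarrow> (real \<times> real \<Rightarrow> 'a::real_normed_vector) \<Rightarrow> real \<times> real \<Rightarrow> 'a" where
  "iter_pd [] g = g"
| "iter_pd (True # ds) g = pd_u (iter_pd ds g)"
| "iter_pd (False # ds) g = pd_v (iter_pd ds g)"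

text \<open>C-infinity on an open set: all iterated partial derivatives exist and are
  (Frechet) differentiable, hence continuous.\<close>
definition smooth_on :: "(real \<times> real) set \<Rightarrow> (real \<times> real \<Rightarrow> 'a::real_normed_vector) \<Rightarrow> bool" where
  "smooth_on S g \<longleftrightarrow> (\<forall>ds. iter_pd ds g differentiable_on S)"

definition tangent_space :: "(real \<times> real \<Rightarrow> real^3) \<Rightarrow> real \<times> real \<Rightarrow> (real^3) set" where
  "tangent_space f q = range (frechet_derivative f (at q))"

definition normal_space :: "(real \<times> real \<Rightarrow> real^3) \<Rightarrow> real \<times> real \<Rightarrow> (real^3) set" where
  "normal_space f q = {n. \<forall>t\<in>tangent_space f q. n \<bullet> t = 0}"

definition normal_proj :: "(real \<times> real \<Rightarrow> real^3) \<Rightarrow> real \<times> real \<Rightarrow> real^3 \<Rightarrow> real^3" where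
  "normal_proj f q x = (THE y. y \<in> normal_space f q \<and> x - y \<in> tangent_space f q)"

definition first_ff :: "(real \<times> real \<Rightarrow> real^3) \<Rightarrow> real \<times> real \<Rightarrow> real \<times> real \<Rightarrow> real \<times> real \<Rightarrow> real" where
  "first_ff f q X Y = frechet_derivative f (at q) X \<bullet> frechet_derivative f (at q) Y"

definition second_ff :: "(real \<times> real \<Rightarrow> real^3) \<Rightarrow> real \<times> real \<Rightarrow> real \<times> real \<Rightarrow> real \<times> real \<Rightarrow> real^3" where
  "second_ff f q X Y =
     (fst X * fst Y) *\<^sub>R normal_proj f q (pd_u (pd_u f) q)
   + (fst X * snd Y + snd X * fst Y) *\<^sub>R normal_proj f q (pd_v (pd_u f) q)
   + (snd X * snd Y) *\<^sub>R normal_proj f q (pd_v (pd_v f) q)"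

definition curvature_parabola :: "(real \<times> real \<Rightarrow> real^3) \<Rightarrow> real \<times> real \<Rightarrow> (real^3) set" where
  "curvature_parabola f q = {second_ff f q X X | X. first_ff f q X X = 1}"

text \<open>A non-degenerate parabola with unit axis vector v pointing to its interior:
  the set c + t e1 + a t^2 v with a > 0, e1, v orthonormal.\<close>
definition parabola_axis :: "(real^3) set \<Rightarrow> real^3 \<Rightarrow> bool" where
  "parabola_axis S v \<longleftrightarrow> norm v = 1 \<and>
     (\<exists>c e1 a. norm e1 = 1 \<and> e1 \<bullet> v = 0 \<and> a > 0 \<and>
        S = {c + t *\<^sub>R e1 + (a * t\<^sup>2) *\<^sub>R v | t. True})"

definition nondeg_parabola :: "(real^3) set \<Rightarrow> bool" where
  "nondeg_parabola S \<longleftrightarrow> (\<exists>v. parabola_axis S v)"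

definition half_line_dir :: "(real^3) set \<Rightarrow> real^3 \<Rightarrow> bool" where
  "half_line_dir S v \<longleftrightarrow> norm v = 1 \<and> (\<exists>c. S = {c + t *\<^sub>R v | t. t \<ge> 0})"

definition half_line :: "(real^3) set \<Rightarrow> bool" where
  "half_line S \<longleftrightarrow> (\<exists>v. half_line_dir S v)"

definition axial_vector :: "(real \<times> real \<Rightarrow> real^3) \<Rightarrow> real \<times> real \<Rightarrow> real^3" where
  "axial_vector f q = (THE v. parabola_axis (curvature_parabola f q) v
                            \<or> half_line_dir (curvature_parabola f q) v)"

definition axial_curvature :: "(real \<times> real \<Rightarrow> real^3) \<Rightarrow> real \<times> real \<Rightarrow> real" where
  "axial_curvature f q =
     (let K = {second_ff f q X X \<bullet> axial_vector f q | X. first_ff f q X X = 1}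
      in THE m. m \<in> K \<and> (\<forall>k\<in>K. m \<le> k))"

end

theory Submission
  imports Defs
begin

lemma hvd_inner:
  assumes "(G has_vector_derivative G') (at t)" "(H has_vector_derivative H') (at t)"
  shows "((\<lambda>s. G s \<bullet> H s) has_vector_derivative (G' \<bullet> H t + G t \<bullet> H')) (at t)"
proof -
  have "((\<lambda>s. G s \<bullet> H s) has_derivative (\<lambda>d. G t \<bullet> (d *\<^sub>R H') + (d *\<^sub>R G') \<bullet> H t)) (at t)"
    using assms unfolding has_vector_derivative_def by (intro has_derivative_inner)
  moreover have "(\<lambda>d. G t \<bullet> (d *\<^sub>R H') + (d *\<^sub>R G') \<bullet> H t) = (\<lambda>d. d *\<^sub>R (G' \<bullet> H t + G t \<bullet> H'))"
    by (auto simp: algebra_simps)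
  ultimately show ?thesis unfolding has_vector_derivative_def by simp
qed

lemma pd_u_at: "pd_u g (a,b) = vector_derivative (\<lambda>t. g (t, b)) (at a)"
  by (simp add: pd_u_def)
lemma pd_v_at: "pd_v g (a,b) = vector_derivative (\<lambda>t. g (a, t)) (at b)"
  by (simp add: pd_v_def)

lemma hvd_u_diff:
  assumes "(g has_derivative D) (at (a,b))"
  shows "((\<lambda>t. g (t, b)) has_vector_derivative D (1,0)) (at a)"
proof -
  have k: "((\<lambda>t. (t, b)) has_derivative (\<lambda>t. (t, 0))) (at a)"
    by (auto intro!: derivative_eq_intros)
  have "((g \<circ> (\<lambda>t. (t, b))) has_derivative (D \<circ> (\<lambda>t. (t, 0)))) (at a)"
    by (rule diff_chain_at[OF k assms])
  moreover have "linear D" using assms has_derivative_linear by blast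
  have "(D \<circ> (\<lambda>t. (t, 0))) = (\<lambda>t. t *\<^sub>R D (1,0))"
  proof
    fix t :: real
    have "(t, 0::real) = t *\<^sub>R (1, 0)" by simp
    then show "(D \<circ> (\<lambda>t. (t, 0))) t = t *\<^sub>R D (1,0)"
      using linear_cmul[OF \<open>linear D\<close>, of t "(1,0)"] by simp
  qed
  ultimately show ?thesis unfolding has_vector_derivative_def by (simp add: o_def)
qed

lemma hvd_v_diff:
  assumes "(g has_derivative D) (at (a,b))"
  shows "((\<lambda>t. g (a, t)) has_vector_derivative D (0,1)) (at b)"
proof -
  have k: "((\<lambda>t. (a, t)) has_derivative (\<lambda>t. (0, t))) (at b)"
    by (auto intro!: derivative_eq_intros)
  have "((g \<circ> (\<lambda>t. (a, t))) has_derivative (D \<circ> (\<lambda>t. (0, t)))) (at b)"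
    by (rule diff_chain_at[OF k assms])
  moreover have "linear D" using assms has_derivative_linear by blast
  have "(D \<circ> (\<lambda>t. (0, t))) = (\<lambda>t. t *\<^sub>R D (0,1))"
  proof
    fix t :: real
    have "(0::real, t) = t *\<^sub>R (0, 1)" by simp
    then show "(D \<circ> (\<lambda>t. (0, t))) t = t *\<^sub>R D (0,1)"
      using linear_cmul[OF \<open>linear D\<close>, of t "(0,1)"] by simp
  qed
  ultimately show ?thesis unfolding has_vector_derivative_def by (simp add: o_def)
qed

lemma pd_u_D: "(g has_derivative D) (at (a,b)) \<Longrightarrow> pd_u g (a,b) = D (1,0)"
  unfolding pd_u_at by (rule vector_derivative_at[OF hvd_u_diff])
lemma pd_v_D: "(g has_derivative D) (at (a,b)) \<Longrightarrow> pd_v g (a,b) = D (0,1)"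
  unfolding pd_v_at by (rule vector_derivative_at[OF hvd_v_diff])

lemma hvd_u_pd: "g differentiable (at (a,b)) \<Longrightarrow>
   ((\<lambda>t. g (t, b)) has_vector_derivative pd_u g (a,b)) (at a)"
proof -
  assume "g differentiable (at (a,b))"
  then obtain D where D: "(g has_derivative D) (at (a,b))" unfolding differentiable_def by blast
  show ?thesis using hvd_u_diff[OF D] pd_u_D[OF D] by simp
qed
lemma hvd_v_pd: "g differentiable (at (a,b)) \<Longrightarrow>
   ((\<lambda>t. g (a, t)) has_vector_derivative pd_v g (a,b)) (at b)"
proof -
  assume "g differentiable (at (a,b))"
  then obtain D where D: "(g has_derivative D) (at (a,b))" unfolding differentiable_def by blast
  show ?thesis using hvd_v_diff[OF D] pd_v_D[OF D] by simp
qed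

lemma frechet_pd:
  assumes "f differentiable (at q)"
  shows "frechet_derivative f (at q) X = fst X *\<^sub>R pd_u f q + snd X *\<^sub>R pd_v f q"
proof -
  obtain a b where q: "q = (a,b)" by (cases q)
  let ?D = "frechet_derivative f (at q)"
  have D: "(f has_derivative ?D) (at q)" using assms frechet_derivative_works by blast
  have lin: "linear ?D" using D has_derivative_linear by blast
  have "X = fst X *\<^sub>R (1,0) + snd X *\<^sub>R (0,1)" by (cases X) simp
  then have "?D X = fst X *\<^sub>R ?D (1,0) + snd X *\<^sub>R ?D (0,1)"
    using linear_add[OF lin] linear_cmul[OF lin] by metis
  moreover have "pd_u f q = ?D (1,0)" "pd_v f q = ?D (0,1)"
    using pd_u_D pd_v_D D q by blast+
  ultimately show ?thesis by simp
qed

lemma open_slice_v: "open S \<Longrightarrow> open {t. (a::real, t::real) \<in> S}"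
proof -
  assume "open S"
  have "open ((\<lambda>t. (a, t)) -` S)"
    by (rule continuous_open_vimage[OF \<open>open S\<close>]) (intro continuous_intros)
  then show ?thesis by (simp add: vimage_def)
qed
lemma open_slice_u: "open S \<Longrightarrow> open {t. (t::real, b::real) \<in> S}"
proof -
  assume "open S"
  have "open ((\<lambda>t. (t, b)) -` S)"
    by (rule continuous_open_vimage[OF \<open>open S\<close>]) (intro continuous_intros)
  then show ?thesis by (simp add: vimage_def)
qed

lemma hvd_v_local:
  fixes S :: "(real \<times> real) set"
  assumes "open S" "(a,b) \<in> S" "\<And>x. x \<in> S \<Longrightarrow> h x = g x"
    "((\<lambda>t. h (a, t)) has_vector_derivative d) (at b)"
  shows "((\<lambda>t. g (a, t)) has_vector_derivative d) (at b)"
proof (rule has_vector_derivative_transform_within_open[OF assms(4) open_slice_v[OF assms(1)]])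
  show "b \<in> {t. (a, t) \<in> S}" using assms(2) by simp
  fix y assume "y \<in> {t. (a, t) \<in> S}"
  then show "h (a, y) = g (a, y)" using assms(3) by simp
qed
lemma hvd_u_local:
  fixes S :: "(real \<times> real) set"
  assumes "open S" "(a,b) \<in> S" "\<And>x. x \<in> S \<Longrightarrow> h x = g x"
    "((\<lambda>t. h (t, b)) has_vector_derivative d) (at a)"
  shows "((\<lambda>t. g (t, b)) has_vector_derivative d) (at a)"
proof (rule has_vector_derivative_transform_within_open[OF assms(4) open_slice_u[OF assms(1)]])
  show "a \<in> {t. (t, b) \<in> S}" using assms(2) by simp
  fix y assume "y \<in> {t. (t, b) \<in> S}"
  then show "h (y, b) = g (y, b)" using assms(3) by simp
qed

lemma box_dist:
  fixes x0 y0 s t d :: real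
  assumes "d > 0" "x0 \<le> s" "s \<le> x0 + d/3" "y0 \<le> t" "t \<le> y0 + d/3"
  shows "dist (s,t) (x0,y0) < d"
proof -
  have "dist (s,t) (x0,y0) = sqrt ((s-x0)^2 + (t-y0)^2)"
    by (simp add: dist_Pair_Pair dist_real_def)
  also have "\<dots> < sqrt (d^2)"
  proof (intro real_sqrt_less_mono)
    have "(s-x0)^2 \<le> (d/3)^2" using assms by (intro power_mono) auto
    moreover have "(t-y0)^2 \<le> (d/3)^2" using assms by (intro power_mono) auto
    moreover have "(d/3)^2 + (d/3)^2 < d^2" using assms by (simp add: power2_eq_square field_simps)
    ultimately show "(s-x0)^2 + (t-y0)^2 < d^2" by linarith
  qed
  also have "\<dots> = d" using assms by simp
  finally show ?thesis .
qed

lemma hvd_inner_const: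
  "(G has_vector_derivative G') (at t) \<Longrightarrow> ((\<lambda>s. w \<bullet> G s) has_real_derivative (w \<bullet> G')) (at t)"
  using hvd_inner[of "\<lambda>_. w" 0 t G G'] by (simp add: has_real_derivative_iff_has_vector_derivative)

lemma schwarz:
  fixes g :: "real \<times> real \<Rightarrow> 'a::real_inner" and S :: "(real \<times> real) set"
  assumes S: "open S" "(x0,y0) \<in> S"
    and dg: "\<And>p. p \<in> S \<Longrightarrow> g differentiable (at p)"
    and dgu: "\<And>p. p \<in> S \<Longrightarrow> pd_u g differentiable (at p)"
    and dgv: "\<And>p. p \<in> S \<Longrightarrow> pd_v g differentiable (at p)"
    and c1: "continuous_on S (pd_v (pd_u g))" and c2: "continuous_on S (pd_u (pd_v g))"
  shows "pd_v (pd_u g) (x0,y0) = pd_u (pd_v g) (x0,y0)"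
proof -
  have main: "w \<bullet> pd_v (pd_u g) (x0,y0) = w \<bullet> pd_u (pd_v g) (x0,y0)" for w
  proof -
    let ?A = "w \<bullet> pd_v (pd_u g) (x0,y0)" and ?B = "w \<bullet> pd_u (pd_v g) (x0,y0)"
    have lt: "\<bar>?A - ?B\<bar> < 2 * e" if e: "e > 0" for e
    proof -
      have ic1: "isCont (\<lambda>p. w \<bullet> pd_v (pd_u g) p) (x0,y0)"
        proof -
        have "isCont (pd_v (pd_u g)) (x0,y0)" using c1 S continuous_on_eq_continuous_at by blast
        then show ?thesis by (intro continuous_intros)
      qed
      have ic2: "isCont (\<lambda>p. w \<bullet> pd_u (pd_v g) p) (x0,y0)"
        proof -
        have "isCont (pd_u (pd_v g)) (x0,y0)" using c2 S continuous_on_eq_continuous_at by blast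
        then show ?thesis by (intro continuous_intros)
      qed
      obtain d1 where d1: "d1 > 0" "\<And>p. dist p (x0,y0) < d1 \<Longrightarrow>
          dist (w \<bullet> pd_v (pd_u g) p) ?A < e"
        using ic1 e unfolding continuous_at_eps_delta by blast
      obtain d2 where d2: "d2 > 0" "\<And>p. dist p (x0,y0) < d2 \<Longrightarrow>
          dist (w \<bullet> pd_u (pd_v g) p) ?B < e"
        using ic2 e unfolding continuous_at_eps_delta by blast
      obtain d0 where d0: "d0 > 0" "ball (x0,y0) d0 \<subseteq> S"
        using S open_contains_ball by blast
      define d where "d = min d0 (min d1 d2)"
      have dpos: "d > 0" using d0 d1 d2 by (simp add: d_def)
      define h where "h = d/3"
      have hpos: "h > 0" using dpos by (simp add: h_def)
      have inS: "(s,t) \<in> S" if "x0 \<le> s" "s \<le> x0 + h" "y0 \<le> t" "t \<le> y0 + h" for s t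
      proof -
        have "dist (s,t) (x0,y0) < d" using box_dist[OF dpos] that by (simp add: h_def)
        then have "(s,t) \<in> ball (x0,y0) d0" by (simp add: d_def dist_commute)
        then show ?thesis using d0 by blast
      qed
      have near1: "\<bar>w \<bullet> pd_v (pd_u g) (s,t) - ?A\<bar> < e"
        if "x0 \<le> s" "s \<le> x0 + h" "y0 \<le> t" "t \<le> y0 + h" for s t
      proof -
        have "dist (s,t) (x0,y0) < d" using box_dist[OF dpos] that by (simp add: h_def)
        then show ?thesis using d1 by (auto simp: d_def dist_real_def)
      qed
      have near2: "\<bar>w \<bullet> pd_u (pd_v g) (s,t) - ?B\<bar> < e"
        if "x0 \<le> s" "s \<le> x0 + h" "y0 \<le> t" "t \<le> y0 + h" for s t
      proof -
        have "dist (s,t) (x0,y0) < d" using box_dist[OF dpos] that by (simp add: h_def)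
        then show ?thesis using d2 by (auto simp: d_def dist_real_def)
      qed
      define \<Delta> where "\<Delta> = w \<bullet> g (x0+h,y0+h) - w \<bullet> g (x0+h,y0) - w \<bullet> g (x0,y0+h) + w \<bullet> g (x0,y0)"
      obtain \<xi> where \<xi>: "x0 < \<xi>" "\<xi> < x0 + h"
        "(w \<bullet> g (x0+h,y0+h) - w \<bullet> g (x0+h,y0)) - (w \<bullet> g (x0,y0+h) - w \<bullet> g (x0,y0))
         = h * (w \<bullet> pd_u g (\<xi>,y0+h) - w \<bullet> pd_u g (\<xi>,y0))"
      proof -
        have "\<exists>z. x0 < z \<and> z < x0 + h \<and>
          (\<lambda>s. w \<bullet> g (s,y0+h) - w \<bullet> g (s,y0)) (x0+h) - (\<lambda>s. w \<bullet> g (s,y0+h) - w \<bullet> g (s,y0)) x0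
          = (x0 + h - x0) * (\<lambda>s. w \<bullet> pd_u g (s,y0+h) - w \<bullet> pd_u g (s,y0)) z"
        proof (rule MVT2)
          show "x0 < x0 + h" using hpos by simp
          fix s assume "x0 \<le> s" "s \<le> x0 + h"
          then have "(s,y0+h) \<in> S" "(s,y0) \<in> S" using inS hpos by auto
          then show "((\<lambda>s. w \<bullet> g (s,y0+h) - w \<bullet> g (s,y0)) has_real_derivative
              (w \<bullet> pd_u g (s,y0+h) - w \<bullet> pd_u g (s,y0))) (at s)"
            by (intro DERIV_diff hvd_inner_const hvd_u_pd dg)
        qed
        then show ?thesis using that by auto
      qed
      obtain \<eta> where \<eta>: "y0 < \<eta>" "\<eta> < y0 + h"
        "w \<bullet> pd_u g (\<xi>,y0+h) - w \<bullet> pd_u g (\<xi>,y0) = h * (w \<bullet> pd_v (pd_u g) (\<xi>,\<eta>))"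
      proof -
        have "\<exists>z. y0 < z \<and> z < y0 + h \<and>
          (\<lambda>t. w \<bullet> pd_u g (\<xi>,t)) (y0+h) - (\<lambda>t. w \<bullet> pd_u g (\<xi>,t)) y0
          = (y0 + h - y0) * (\<lambda>t. w \<bullet> pd_v (pd_u g) (\<xi>,t)) z"
        proof (rule MVT2)
          show "y0 < y0 + h" using hpos by simp
          fix t assume "y0 \<le> t" "t \<le> y0 + h"
          then have "(\<xi>,t) \<in> S" using inS \<xi> by auto
          then show "((\<lambda>t. w \<bullet> pd_u g (\<xi>,t)) has_real_derivative
              (w \<bullet> pd_v (pd_u g) (\<xi>,t))) (at t)"
            by (intro hvd_inner_const hvd_v_pd dgu)
        qed
        then show ?thesis using that by auto
      qed
      have D1: "\<Delta> = h * h * (w \<bullet> pd_v (pd_u g) (\<xi>,\<eta>))"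
        using \<xi>(3) \<eta>(3) by (simp add: \<Delta>_def algebra_simps)
      obtain \<eta>' where \<eta>': "y0 < \<eta>'" "\<eta>' < y0 + h"
        "(w \<bullet> g (x0+h,y0+h) - w \<bullet> g (x0,y0+h)) - (w \<bullet> g (x0+h,y0) - w \<bullet> g (x0,y0))
         = h * (w \<bullet> pd_v g (x0+h,\<eta>') - w \<bullet> pd_v g (x0,\<eta>'))"
      proof -
        have "\<exists>z. y0 < z \<and> z < y0 + h \<and>
          (\<lambda>t. w \<bullet> g (x0+h,t) - w \<bullet> g (x0,t)) (y0+h) - (\<lambda>t. w \<bullet> g (x0+h,t) - w \<bullet> g (x0,t)) y0
          = (y0 + h - y0) * (\<lambda>t. w \<bullet> pd_v g (x0+h,t) - w \<bullet> pd_v g (x0,t)) z"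
        proof (rule MVT2)
          show "y0 < y0 + h" using hpos by simp
          fix t assume "y0 \<le> t" "t \<le> y0 + h"
          then have "(x0+h,t) \<in> S" "(x0,t) \<in> S" using inS hpos by auto
          then show "((\<lambda>t. w \<bullet> g (x0+h,t) - w \<bullet> g (x0,t)) has_real_derivative
              (w \<bullet> pd_v g (x0+h,t) - w \<bullet> pd_v g (x0,t))) (at t)"
            by (intro DERIV_diff hvd_inner_const hvd_v_pd dg)
        qed
        then show ?thesis using that by auto
      qed
      obtain \<xi>' where \<xi>': "x0 < \<xi>'" "\<xi>' < x0 + h"
        "w \<bullet> pd_v g (x0+h,\<eta>') - w \<bullet> pd_v g (x0,\<eta>') = h * (w \<bullet> pd_u (pd_v g) (\<xi>',\<eta>'))"
      proof -
        have "\<exists>z. x0 < z \<and> z < x0 + h \<and>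
          (\<lambda>s. w \<bullet> pd_v g (s,\<eta>')) (x0+h) - (\<lambda>s. w \<bullet> pd_v g (s,\<eta>')) x0
          = (x0 + h - x0) * (\<lambda>s. w \<bullet> pd_u (pd_v g) (s,\<eta>')) z"
        proof (rule MVT2)
          show "x0 < x0 + h" using hpos by simp
          fix s assume "x0 \<le> s" "s \<le> x0 + h"
          then have "(s,\<eta>') \<in> S" using inS \<eta>' by auto
          then show "((\<lambda>s. w \<bullet> pd_v g (s,\<eta>')) has_real_derivative
              (w \<bullet> pd_u (pd_v g) (s,\<eta>'))) (at s)"
            by (intro hvd_inner_const hvd_u_pd dgv)
        qed
        then show ?thesis using that by auto
      qed
      have D2: "\<Delta> = h * h * (w \<bullet> pd_u (pd_v g) (\<xi>',\<eta>'))"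
        using \<xi>'(3) \<eta>'(3) by (simp add: \<Delta>_def algebra_simps)
      have eq: "w \<bullet> pd_v (pd_u g) (\<xi>,\<eta>) = w \<bullet> pd_u (pd_v g) (\<xi>',\<eta>')"
        using D1 D2 hpos by simp
      have "\<bar>w \<bullet> pd_v (pd_u g) (\<xi>,\<eta>) - ?A\<bar> < e" using near1 \<xi> \<eta> by simp
      moreover have "\<bar>w \<bullet> pd_u (pd_v g) (\<xi>',\<eta>') - ?B\<bar> < e" using near2 \<xi>' \<eta>' by simp
      ultimately show ?thesis using eq by linarith
    qed
    show ?thesis
    proof (rule ccontr)
      assume "?A \<noteq> ?B"
      then have "\<bar>?A - ?B\<bar> / 4 > 0" by simp
      from lt[OF this] show False by simp
    qed
  qed
  let ?d = "pd_v (pd_u g) (x0,y0) - pd_u (pd_v g) (x0,y0)"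
  have "?d \<bullet> ?d = 0"
    using main[of ?d] by (simp only: inner_diff_right)
  then show ?thesis by simp
qed

lemma parab_axis_dir:
  fixes c w1 w2 v :: "real^3"
  assumes "parabola_axis (range (\<lambda>s. c + s *\<^sub>R w1 + s\<^sup>2 *\<^sub>R w2)) v"
  shows "\<exists>l>0. w2 = l *\<^sub>R v"
proof -
  let ?p = "\<lambda>s::real. c + s *\<^sub>R w1 + s\<^sup>2 *\<^sub>R w2"
  obtain c' e1 a where nv: "norm v = 1" and ne: "norm e1 = 1" and ev: "e1 \<bullet> v = 0" and a: "a > 0"
    and P: "range ?p = {c' + t *\<^sub>R e1 + (a * t\<^sup>2) *\<^sub>R v | t. True}"
    using assms unfolding parabola_axis_def by blast
  have vv: "v \<bullet> v = 1" using nv by (simp add: dot_square_norm)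
  have ee: "e1 \<bullet> e1 = 1" using ne by (simp add: dot_square_norm)
  have ve: "v \<bullet> e1 = 0" using ev by (simp add: inner_commute)
  define x where "x s = (?p s - c') \<bullet> e1" for s
  define y where "y s = (?p s - c') \<bullet> v" for s
  have rep: "?p s - c' = x s *\<^sub>R e1 + (a * (x s)\<^sup>2) *\<^sub>R v \<and> y s = a * (x s)\<^sup>2" for s
  proof -
    have "?p s \<in> range ?p" by simp
    then obtain t where t: "?p s = c' + t *\<^sub>R e1 + (a * t\<^sup>2) *\<^sub>R v" using P by blast
    then have d: "?p s - c' = t *\<^sub>R e1 + (a * t\<^sup>2) *\<^sub>R v" by (simp add: algebra_simps)
    have "x s = t" unfolding x_def d by (simp add: inner_add_left ee ve)
    moreover have "y s = a * t\<^sup>2" unfolding y_def d by (simp add: inner_add_left vv ev)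
    ultimately show ?thesis using d by simp
  qed
  define b0 where "b0 = (c - c') \<bullet> e1"
  define b1 where "b1 = w1 \<bullet> e1"
  define b2 where "b2 = w2 \<bullet> e1"
  define a0 where "a0 = (c - c') \<bullet> v"
  define a1 where "a1 = w1 \<bullet> v"
  define a2 where "a2 = w2 \<bullet> v"
  have xs: "x s = b0 + b1 * s + b2 * s\<^sup>2" for s
    unfolding x_def b0_def b1_def b2_def by (simp add: algebra_simps inner_add_left inner_diff_left)
  have ys: "y s = a0 + a1 * s + a2 * s\<^sup>2" for s
    unfolding y_def a0_def a1_def a2_def by (simp add: algebra_simps inner_add_left inner_diff_left)
  have poly: "a0 + a1 * s + a2 * s\<^sup>2 = a * (b0 + b1 * s + b2 * s\<^sup>2)\<^sup>2" for s
    using rep[of s] xs[of s] ys[of s] by simp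
  have "24 * a * b2\<^sup>2 = a * (b0 + b1 * 2 + b2 * 2\<^sup>2)\<^sup>2 - 4 * (a * (b0 + b1 * 1 + b2 * 1\<^sup>2)\<^sup>2)
      + 6 * (a * (b0 + b1 * 0 + b2 * 0\<^sup>2)\<^sup>2) - 4 * (a * (b0 + b1 * (-1) + b2 * (-1)\<^sup>2)\<^sup>2)
      + a * (b0 + b1 * (-2) + b2 * (-2)\<^sup>2)\<^sup>2"
    by (simp add: power2_eq_square algebra_simps)
  also have "\<dots> = (a0 + a1 * 2 + a2 * 2\<^sup>2) - 4 * (a0 + a1 * 1 + a2 * 1\<^sup>2) + 6 * (a0 + a1 * 0 + a2 * 0\<^sup>2)
      - 4 * (a0 + a1 * (-1) + a2 * (-1)\<^sup>2) + (a0 + a1 * (-2) + a2 * (-2)\<^sup>2)"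
    by (simp only: poly)
  also have "\<dots> = 0" by (simp add: power2_eq_square algebra_simps)
  finally have "b2 = 0" using a by simp
  have "b1 \<noteq> 0"
  proof
    assume b1: "b1 = 0"
    have "c' + (b0 + 1) *\<^sub>R e1 + (a * (b0+1)\<^sup>2) *\<^sub>R v \<in> range ?p" using P by blast
    then obtain s where "?p s = c' + (b0 + 1) *\<^sub>R e1 + (a * (b0+1)\<^sup>2) *\<^sub>R v" by auto
    then have "?p s - c' = (b0 + 1) *\<^sub>R e1 + (a * (b0+1)\<^sup>2) *\<^sub>R v" by (simp add: algebra_simps)
    then have "x s = b0 + 1" unfolding x_def by (simp add: inner_add_left ee ve)
    then show False using xs[of s] b1 \<open>b2 = 0\<close> by simp
  qed
  have "2 *\<^sub>R w2 = (?p 1 - c') + (?p (-1) - c') - 2 *\<^sub>R (?p 0 - c')"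
    by (simp add: vec_eq_iff algebra_simps)
  also have "\<dots> = (2 * a * b1\<^sup>2) *\<^sub>R v"
    unfolding rep[THEN conjunct1] xs \<open>b2 = 0\<close>
    by (simp add: vec_eq_iff algebra_simps power2_eq_square)
  finally have "w2 = (a * b1\<^sup>2) *\<^sub>R v"
    by (simp add: vec_eq_iff)
  moreover have "a * b1\<^sup>2 > 0" using a \<open>b1 \<noteq> 0\<close> by simp
  ultimately show ?thesis by blast
qed

lemma half_line_dir_w2:
  fixes c w1 w2 v :: "real^3"
  assumes "half_line_dir (range (\<lambda>s. c + s *\<^sub>R w1 + s\<^sup>2 *\<^sub>R w2)) v"
  shows "\<exists>l>0. w2 = l *\<^sub>R v"
proof -
  let ?p = "\<lambda>s::real. c + s *\<^sub>R w1 + s\<^sup>2 *\<^sub>R w2"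
  obtain c' where nv: "norm v = 1" and P: "range ?p = {c' + t *\<^sub>R v | t. t \<ge> 0}"
    using assms unfolding half_line_dir_def by blast
  have vv: "v \<bullet> v = 1" using nv by (simp add: dot_square_norm)
  define y where "y s = (?p s - c') \<bullet> v" for s
  have rep: "?p s - c' = y s *\<^sub>R v \<and> y s \<ge> 0" for s
  proof -
    have "?p s \<in> range ?p" by simp
    then obtain t where t: "?p s = c' + t *\<^sub>R v" "t \<ge> 0" using P by blast
    then have d: "?p s - c' = t *\<^sub>R v" by (simp add: algebra_simps)
    have "y s = t" unfolding y_def d by (simp add: vv)
    then show ?thesis using d t by simp
  qed
  have surj: "\<exists>s. y s = T" if "T \<ge> 0" for T
  proof -
    have "c' + T *\<^sub>R v \<in> range ?p" using P that by blast
    then obtain s where "?p s = c' + T *\<^sub>R v" by auto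
    then have "?p s - c' = T *\<^sub>R v" by (simp add: algebra_simps)
    then have "y s = T" unfolding y_def by (simp add: vv)
    then show ?thesis by blast
  qed
  define a0 where "a0 = (c - c') \<bullet> v"
  define a1 where "a1 = w1 \<bullet> v"
  define a2 where "a2 = w2 \<bullet> v"
  have ys: "y s = a0 + a1 * s + a2 * s\<^sup>2" for s
    unfolding y_def a0_def a1_def a2_def by (simp add: algebra_simps inner_add_left inner_diff_left)
  have a2: "a2 > 0"
  proof (rule ccontr)
    assume "\<not> a2 > 0"
    then consider "a2 < 0" | "a2 = 0" by linarith
    then show False
    proof cases
      case 1
      define T where "T = \<bar>a0\<bar> + a1\<^sup>2 / (- 4 * a2) + 1"
      have "a1\<^sup>2 / (- 4 * a2) \<ge> 0" using 1 by (intro divide_nonneg_pos) auto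
      then have T0: "T \<ge> 0" unfolding T_def by simp
      obtain s where s: "y s = T" using surj[OF T0] by blast
      have sq: "- a2 * (s + a1 / (2 * a2))\<^sup>2 \<ge> 0" using 1 by (intro mult_nonneg_nonneg) auto
      have "- a2 * (s + a1 / (2 * a2))\<^sup>2 = - a2 * s\<^sup>2 - a1 * s + a1\<^sup>2 / (- 4 * a2)"
        using 1 by (simp add: power2_eq_square field_simps)
      then have "T \<le> a0 + a1\<^sup>2 / (- 4 * a2)" using sq s ys[of s] by linarith
      then show False unfolding T_def by linarith
    next
      case 2
      show False
      proof (cases "a1 = 0")
        case True
        obtain s where "y s = \<bar>a0\<bar> + 1" using surj[of "\<bar>a0\<bar> + 1"] by auto
        moreover have "y 0 \<ge> 0" using rep by blast
        ultimately show False using ys[of s] ys[of 0] True 2 by simp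
      next
        case False
        have "y (- (\<bar>a0\<bar> + 1) / a1) = a0 - \<bar>a0\<bar> - 1" using ys False 2 by simp
        then show False using rep[of "- (\<bar>a0\<bar> + 1) / a1"] by linarith
      qed
    qed
  qed
  have "2 *\<^sub>R w2 = (?p 1 - c') + (?p (-1) - c') - 2 *\<^sub>R (?p 0 - c')"
    by (simp add: vec_eq_iff algebra_simps)
  also have "\<dots> = (y 1 + y (-1) - 2 * y 0) *\<^sub>R v"
    unfolding rep[THEN conjunct1] by (simp add: algebra_simps)
  also have "y 1 + y (-1) - 2 * y 0 = 2 * a2" unfolding ys by simp
  finally have "w2 = a2 *\<^sub>R v" by (simp add: vec_eq_iff)
  then show ?thesis using a2 by blast
qed

lemma pd_u_inner:
  assumes "g differentiable (at (a,b))" "h differentiable (at (a,b))"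
  shows "pd_u (\<lambda>x. g x \<bullet> h x) (a,b) = pd_u g (a,b) \<bullet> h (a,b) + g (a,b) \<bullet> pd_u h (a,b)"
  unfolding pd_u_at[of "\<lambda>x. g x \<bullet> h x"]
  by (rule vector_derivative_at[OF hvd_inner[OF hvd_u_pd[OF assms(1)] hvd_u_pd[OF assms(2)]]])

lemma pd_v_inner:
  assumes "g differentiable (at (a,b))" "h differentiable (at (a,b))"
  shows "pd_v (\<lambda>x. g x \<bullet> h x) (a,b) = pd_v g (a,b) \<bullet> h (a,b) + g (a,b) \<bullet> pd_v h (a,b)"
  unfolding pd_v_at[of "\<lambda>x. g x \<bullet> h x"]
  by (rule vector_derivative_at[OF hvd_inner[OF hvd_v_pd[OF assms(1)] hvd_v_pd[OF assms(2)]]])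

lemma pd_v_local1:
  fixes S :: "(real \<times> real) set"
  assumes "open S" "(a,b) \<in> S" "\<And>x. x \<in> S \<Longrightarrow> k x = h x" "h differentiable (at (a,b))"
  shows "pd_v k (a,b) = pd_v h (a,b)"
proof -
  have "((\<lambda>t. k (a, t)) has_vector_derivative pd_v h (a,b)) (at b)"
    by (rule hvd_v_local[OF assms(1,2) _ hvd_v_pd[OF assms(4)]]) (simp add: assms(3))
  then show ?thesis unfolding pd_v_at by (rule vector_derivative_at)
qed

lemma pd_v_local2:
  fixes S :: "(real \<times> real) set"
  assumes "open S" "(a,b) \<in> S" "\<And>x. x \<in> S \<Longrightarrow> k x = g1 x \<bullet> h1 x + g2 x \<bullet> h2 x"
    "g1 differentiable (at (a,b))" "h1 differentiable (at (a,b))"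
    "g2 differentiable (at (a,b))" "h2 differentiable (at (a,b))"
  shows "pd_v k (a,b) = (pd_v g1 (a,b) \<bullet> h1 (a,b) + g1 (a,b) \<bullet> pd_v h1 (a,b))
     + (pd_v g2 (a,b) \<bullet> h2 (a,b) + g2 (a,b) \<bullet> pd_v h2 (a,b))"
proof -
  have hv: "((\<lambda>t. g1 (a,t) \<bullet> h1 (a,t) + g2 (a,t) \<bullet> h2 (a,t)) has_vector_derivative
     (pd_v g1 (a,b) \<bullet> h1 (a,b) + g1 (a,b) \<bullet> pd_v h1 (a,b))
     + (pd_v g2 (a,b) \<bullet> h2 (a,b) + g2 (a,b) \<bullet> pd_v h2 (a,b))) (at b)"
    by (intro has_vector_derivative_add hvd_inner[where G="\<lambda>t. g1 (a,t)" and H="\<lambda>t. h1 (a,t)", simplified]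
         hvd_inner[where G="\<lambda>t. g2 (a,t)" and H="\<lambda>t. h2 (a,t)", simplified] hvd_v_pd assms(4-7))
  have "((\<lambda>t. k (a, t)) has_vector_derivative
     (pd_v g1 (a,b) \<bullet> h1 (a,b) + g1 (a,b) \<bullet> pd_v h1 (a,b))
     + (pd_v g2 (a,b) \<bullet> h2 (a,b) + g2 (a,b) \<bullet> pd_v h2 (a,b))) (at b)"
    by (rule hvd_v_local[OF assms(1,2) _ hv]) (simp add: assms(3))
  then show ?thesis unfolding pd_v_at by (rule vector_derivative_at)
qed

lemma quad_min:
  fixes al be ga :: real
  assumes "ga > 0"
  shows "(THE m. m \<in> range (\<lambda>s. al + be * s + ga * s\<^sup>2) \<and> (\<forall>k\<in>range (\<lambda>s. al + be * s + ga * s\<^sup>2). m \<le> k))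
     = al - be\<^sup>2 / (4 * ga)"
proof (rule the_equality)
  let ?m = "al - be\<^sup>2 / (4 * ga)"
  have eq: "al + be * s + ga * s\<^sup>2 = ?m + ga * (s + be / (2 * ga))\<^sup>2" for s
    using assms by (simp add: power2_eq_square field_simps)
  have "?m = al + be * (- be / (2*ga)) + ga * (- be / (2*ga))\<^sup>2"
    using eq[of "- be / (2*ga)"] by simp
  then have "?m \<in> range (\<lambda>s. al + be * s + ga * s\<^sup>2)" by (rule range_eqI)
  moreover have "\<forall>k\<in>range (\<lambda>s. al + be * s + ga * s\<^sup>2). ?m \<le> k"
  proof
    fix k assume "k \<in> range (\<lambda>s. al + be * s + ga * s\<^sup>2)"
    then obtain s where "k = al + be * s + ga * s\<^sup>2" by auto
    then show "?m \<le> k" using eq[of s] assms by simp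
  qed
  ultimately show "?m \<in> range (\<lambda>s. al + be * s + ga * s\<^sup>2) \<and> (\<forall>k\<in>range (\<lambda>s. al + be * s + ga * s\<^sup>2). ?m \<le> k)"
    by blast
  fix m assume m: "m \<in> range (\<lambda>s. al + be * s + ga * s\<^sup>2) \<and> (\<forall>k\<in>range (\<lambda>s. al + be * s + ga * s\<^sup>2). m \<le> k)"
  then obtain s where s: "m = al + be * s + ga * s\<^sup>2" by auto
  have "?m \<in> range (\<lambda>s. al + be * s + ga * s\<^sup>2)" using \<open>?m = _\<close> by (rule range_eqI)
  then have "m \<le> ?m" using m by blast
  moreover have "?m \<le> m" using s eq[of s] assms by simp
  ultimately show "m = ?m" by simp
qed

lemma final_alg:
  fixes E n cc uc ac au bc bu :: real
  assumes E: "E > 0" and n: "n > 0" and nn: "n\<^sup>2 = cc - uc\<^sup>2 / E"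
  shows "(ac - au * uc / E) / (E * n) - (2 * (bc - bu * uc / E) / (sqrt E * n))\<^sup>2 / (4 * n)
    = ((au * uc - E * ac) * (uc\<^sup>2 - E * cc) - (bu * uc - E * bc)\<^sup>2) / (E * (E * cc - uc\<^sup>2)) powr (3/2)"
proof -
  have h: "E * cc = uc\<^sup>2 + E * n\<^sup>2" using nn E by (simp add: field_simps)
  have "E * (E * cc - uc\<^sup>2) = E * (E * cc) - E * uc\<^sup>2" by (simp add: algebra_simps)
  also have "\<dots> = E * (uc\<^sup>2 + E * n\<^sup>2) - E * uc\<^sup>2" by (simp only: h)
  also have "\<dots> = (E * n)\<^sup>2" by (simp add: power2_eq_square algebra_simps)
  finally have d: "E * (E * cc - uc\<^sup>2) = (E * n)\<^sup>2" .
  have "(E * (E * cc - uc\<^sup>2)) powr (3/2) = (E * n) ^ 3"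
  proof -
    have "((E * n)\<^sup>2) powr (3/2) = ((E*n) powr 2) powr (3/2)"
      using E n by (subst powr_numeral) auto
    also have "\<dots> = (E*n) powr 3" by (simp add: powr_powr)
    also have "\<dots> = (E*n)^3" using E n by (subst powr_numeral) auto
    finally show ?thesis using d by simp
  qed
  moreover have "uc\<^sup>2 - E * cc = - E * n\<^sup>2" using nn E by (simp add: field_simps)
  moreover have "(sqrt E)\<^sup>2 = E" using E by simp
  ultimately have R: "((au * uc - E * ac) * (uc\<^sup>2 - E * cc) - (bu * uc - E * bc)\<^sup>2) / (E * (E * cc - uc\<^sup>2)) powr (3/2)
     = ((au * uc - E * ac) * (- E * n\<^sup>2) - (bu * uc - E * bc)\<^sup>2) / (E * n) ^ 3" by simp
  have s2: "(sqrt E)\<^sup>2 = E" using E by simp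
  have L: "(2 * (bc - bu * uc / E) / (sqrt E * n))\<^sup>2 = 4 * (bc - bu * uc / E)\<^sup>2 / (E * n\<^sup>2)"
  proof -
    have "(2 * (bc - bu * uc / E))\<^sup>2 = 4 * (bc - bu * uc / E)\<^sup>2" by (simp only: power_mult_distrib) simp
    then show ?thesis by (simp only: power_divide power_mult_distrib s2)
  qed
  show ?thesis unfolding R L using E n
    by (simp add: field_simps power2_eq_square power3_eq_cube)
qed

lemma core:
  fixes f :: "real \<times> real \<Rightarrow> real^3" and q :: "real \<times> real" and U Auu Buv Cvv :: "real^3"
  assumes Epos: "U \<bullet> U > 0"
    and FD: "\<And>X. frechet_derivative f (at q) X = fst X *\<^sub>R U"
    and p1: "pd_u (pd_u f) q = Auu" and p2: "pd_v (pd_u f) q = Buv" and p3: "pd_v (pd_v f) q = Cvv"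
    and shape: "nondeg_parabola (curvature_parabola f q) \<or> half_line (curvature_parabola f q)"
  shows "axial_curvature f q =
    (((U \<bullet> Auu) * (U \<bullet> Cvv) - (U \<bullet> U) * (Auu \<bullet> Cvv)) * ((U \<bullet> Cvv)\<^sup>2 - (U \<bullet> U) * (Cvv \<bullet> Cvv))
     - ((Buv \<bullet> U) * (U \<bullet> Cvv) - (U \<bullet> U) * (Buv \<bullet> Cvv))\<^sup>2)
    / ((U \<bullet> U) * ((U \<bullet> U) * (Cvv \<bullet> Cvv) - (U \<bullet> Cvv)\<^sup>2)) powr (3/2)"
proof -
  define E where "E = U \<bullet> U"
  have E: "E > 0" using Epos by (simp add: E_def)
  have T: "tangent_space f q = range (\<lambda>r. r *\<^sub>R U)"
    unfolding tangent_space_def FD by (auto simp: image_iff)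
  have NP: "normal_proj f q x = x - ((x \<bullet> U) / E) *\<^sub>R U" for x
    unfolding normal_proj_def
  proof (rule the_equality)
    show "x - ((x \<bullet> U) / E) *\<^sub>R U \<in> normal_space f q \<and> x - (x - ((x \<bullet> U) / E) *\<^sub>R U) \<in> tangent_space f q"
      unfolding normal_space_def T using E by (auto simp: inner_diff_left E_def)
    fix y assume y: "y \<in> normal_space f q \<and> x - y \<in> tangent_space f q"
    then obtain r where r: "x - y = r *\<^sub>R U" unfolding T by auto
    have "U \<in> tangent_space f q" unfolding T by (auto intro: range_eqI[of _ _ 1])
    then have "y \<bullet> U = 0" using y unfolding normal_space_def by (simp add: inner_commute)
    moreover have "y = x - r *\<^sub>R U" using r by (simp add: algebra_simps)
    ultimately have "x \<bullet> U = r * E" by (simp add: inner_diff_left E_def)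
    then have "r = (x \<bullet> U) / E" using E by simp
    then show "y = x - ((x \<bullet> U) / E) *\<^sub>R U" using \<open>y = x - r *\<^sub>R U\<close> by simp
  qed
  define A where "A = Auu - ((Auu \<bullet> U) / E) *\<^sub>R U"
  define B where "B = Buv - ((Buv \<bullet> U) / E) *\<^sub>R U"
  define C where "C = Cvv - ((Cvv \<bullet> U) / E) *\<^sub>R U"
  have FF: "first_ff f q X X = (fst X)\<^sup>2 * E" for X
    unfolding first_ff_def FD E_def by (simp add: power2_eq_square)
  have SF: "second_ff f q X X = (fst X)\<^sup>2 *\<^sub>R A + (2 * fst X * snd X) *\<^sub>R B + (snd X)\<^sup>2 *\<^sub>R C" for X
    unfolding second_ff_def p1 p2 p3 NP A_def B_def C_def by (simp add: power2_eq_square algebra_simps)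
  define c where "c = (1/E) *\<^sub>R A"
  define w1 where "w1 = (2 / sqrt E) *\<^sub>R B"
  let ?p = "\<lambda>s::real. c + s *\<^sub>R w1 + s\<^sup>2 *\<^sub>R C"
  have sE: "(sqrt E)\<^sup>2 = E" "sqrt E > 0" using E by auto
  have CP: "curvature_parabola f q = range ?p"
  proof
    show "curvature_parabola f q \<subseteq> range ?p"
    proof
      fix z assume "z \<in> curvature_parabola f q"
      then obtain X where X: "z = second_ff f q X X" "first_ff f q X X = 1"
        unfolding curvature_parabola_def by blast
      obtain r t where rt: "X = (r,t)" by (cases X)
      have "(r * sqrt E)\<^sup>2 = 1" using X(2) sE unfolding FF rt by (simp add: power_mult_distrib)
      then have "r * sqrt E = 1 \<or> r * sqrt E = -1" by (simp add: power2_eq_1_iff)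
      then have "r = 1 / sqrt E \<or> r = - 1 / sqrt E" using sE by (auto simp: field_simps)
      then show "z \<in> range ?p"
      proof
        assume r: "r = 1 / sqrt E"
        have "z = ?p t" unfolding X rt SF c_def w1_def r using sE
          by (simp add: power_divide algebra_simps)
        then show ?thesis by blast
      next
        assume r: "r = - 1 / sqrt E"
        have "z = ?p (-t)" unfolding X rt SF c_def w1_def r using sE
          by (simp add: power_divide algebra_simps)
        then show ?thesis by blast
      qed
    qed
    show "range ?p \<subseteq> curvature_parabola f q"
    proof
      fix z assume "z \<in> range ?p"
      then obtain s where s: "z = ?p s" by blast
      have "z = second_ff f q (1 / sqrt E, s) (1 / sqrt E, s)" "first_ff f q (1 / sqrt E, s) (1 / sqrt E, s) = 1"
        unfolding s SF FF c_def w1_def using sE E by (simp_all add: power_divide algebra_simps)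
      then show "z \<in> curvature_parabola f q" unfolding curvature_parabola_def by blast
    qed
  qed
  have dir: "C \<noteq> 0 \<and> v = (1 / norm C) *\<^sub>R C"
    if "parabola_axis (curvature_parabola f q) v \<or> half_line_dir (curvature_parabola f q) v" for v
  proof -
    have "\<exists>l>0. C = l *\<^sub>R v" using that unfolding CP
      using parab_axis_dir[of c w1 C v] half_line_dir_w2[of c w1 C v] by blast
    then obtain l where l: "l > 0" "C = l *\<^sub>R v" by blast
    have "norm v = 1" using that unfolding parabola_axis_def half_line_dir_def by blast
    then have "norm C = l" using l by simp
    then show ?thesis using l \<open>norm v = 1\<close> by auto
  qed
  obtain v0 where v0: "parabola_axis (curvature_parabola f q) v0 \<or> half_line_dir (curvature_parabola f q) v0"
    using shape unfolding nondeg_parabola_def half_line_def by blast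
  have C0: "C \<noteq> 0" using dir[OF v0] by blast
  define n where "n = norm C"
  have n: "n > 0" using C0 by (simp add: n_def)
  have AV: "axial_vector f q = (1 / n) *\<^sub>R C"
    unfolding axial_vector_def
  proof (rule the_equality)
    show "parabola_axis (curvature_parabola f q) ((1 / n) *\<^sub>R C) \<or> half_line_dir (curvature_parabola f q) ((1 / n) *\<^sub>R C)"
      using v0 dir[OF v0] by (simp add: n_def)
    fix v assume "parabola_axis (curvature_parabola f q) v \<or> half_line_dir (curvature_parabola f q) v"
    then show "v = (1 / n) *\<^sub>R C" using dir by (simp add: n_def)
  qed
  define al where "al = c \<bullet> ((1 / n) *\<^sub>R C)"
  define be where "be = w1 \<bullet> ((1 / n) *\<^sub>R C)"
  have CC: "C \<bullet> C = n\<^sup>2" by (simp add: n_def dot_square_norm)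
  have ga: "C \<bullet> ((1 / n) *\<^sub>R C) = n" using n CC by (simp add: power2_eq_square)
  have K: "{second_ff f q X X \<bullet> axial_vector f q | X. first_ff f q X X = 1}
      = range (\<lambda>s. al + be * s + n * s\<^sup>2)"
  proof -
    have "{second_ff f q X X \<bullet> axial_vector f q | X. first_ff f q X X = 1}
        = (\<lambda>z. z \<bullet> axial_vector f q) ` curvature_parabola f q"
      unfolding curvature_parabola_def by blast
    also have "\<dots> = range (\<lambda>s. ?p s \<bullet> ((1 / n) *\<^sub>R C))" unfolding CP AV by (simp add: image_image)
    also have "(\<lambda>s. ?p s \<bullet> ((1 / n) *\<^sub>R C)) = (\<lambda>s. al + be * s + n * s\<^sup>2)"
    proof
      fix s
      have "?p s \<bullet> ((1 / n) *\<^sub>R C) = al + s * be + s\<^sup>2 * (C \<bullet> ((1 / n) *\<^sub>R C))"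
        unfolding al_def be_def by (simp only: inner_add_left inner_scaleR_left)
      then show "?p s \<bullet> ((1 / n) *\<^sub>R C) = al + be * s + n * s\<^sup>2" unfolding ga by (simp add: mult.commute)
    qed
    finally show ?thesis .
  qed
  have AC: "axial_curvature f q = al - be\<^sup>2 / (4 * n)"
    unfolding axial_curvature_def Let_def K using quad_min[OF n] by simp
  have al': "al = ((Auu \<bullet> Cvv) - (Auu \<bullet> U) * (U \<bullet> Cvv) / E) / (E * n)"
    unfolding al_def c_def A_def C_def using E n
    by (simp add: inner_diff_left inner_diff_right inner_commute E_def field_simps)
  have be': "be = 2 * ((Buv \<bullet> Cvv) - (Buv \<bullet> U) * (U \<bullet> Cvv) / E) / (sqrt E * n)"
    unfolding be_def w1_def B_def C_def using E n
    by (simp add: inner_diff_left inner_diff_right inner_commute E_def field_simps)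
  have nn: "n\<^sup>2 = (Cvv \<bullet> Cvv) - (U \<bullet> Cvv)\<^sup>2 / E"
    unfolding CC[symmetric] C_def using E
    by (simp add: inner_diff_left inner_diff_right inner_commute E_def field_simps power2_eq_square)
  show ?thesis
    unfolding AC al' be' E_def[symmetric]
    using final_alg[OF E n nn, of "Auu \<bullet> Cvv" "Auu \<bullet> U" "Buv \<bullet> Cvv" "Buv \<bullet> U"]
    by (simp add: inner_commute)
qed

theorem mainTheorem4:
  fixes f :: "real \<times> real \<Rightarrow> real^3" and q :: "real \<times> real" and S :: "(real \<times> real) set"
  assumes "open S" and "q \<in> S" and "smooth_on S f"
    and corank1: "dim (tangent_space f q) = 1"
    and shape: "nondeg_parabola (curvature_parabola f q) \<or> half_line (curvature_parabola f q)"
    and "pd_u f q \<noteq> 0" and "pd_v f q = 0"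
  defines "E \<equiv> \<lambda>x. pd_u f x \<bullet> pd_u f x"
    and "F \<equiv> \<lambda>x. pd_u f x \<bullet> pd_v f x"
    and "G \<equiv> \<lambda>x. pd_v f x \<bullet> pd_v f x"
  shows "axial_curvature f q =
    ((pd_u E q / 2 * pd_v F q - E q * (pd_v (pd_u F) q - pd_v (pd_v E) q / 2))
       * ((pd_v F q)\<^sup>2 - E q * pd_v (pd_v G) q / 2)
     - (pd_v E q / 2 * pd_v F q - E q * pd_v (pd_u G) q / 2)\<^sup>2)
    / (E q * (E q * pd_v (pd_v G) q / 2 - (pd_v F q)\<^sup>2)) powr (3/2)"
proof -
  note oS = \<open>open S\<close>
  obtain a b where q: "q = (a,b)" by (cases q)
  have qS: "(a,b) \<in> S" using \<open>q \<in> S\<close> q by simp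
  have dS: "iter_pd ds f differentiable (at x)" if "x \<in> S" for ds x
    using \<open>smooth_on S f\<close> that differentiable_on_eq_differentiable_at[OF oS]
    unfolding smooth_on_def by blast
  have dS_on: "iter_pd ds f differentiable_on S" for ds
    using \<open>smooth_on S f\<close> unfolding smooth_on_def by blast
  have d0: "f differentiable (at x)" if "x \<in> S" for x using dS[OF that, of "[]"] by simp
  have du: "pd_u f differentiable (at x)" if "x \<in> S" for x using dS[OF that, of "[True]"] by simp
  have dv: "pd_v f differentiable (at x)" if "x \<in> S" for x using dS[OF that, of "[False]"] by simp
  have duu: "pd_u (pd_u f) differentiable (at x)" if "x \<in> S" for x using dS[OF that, of "[True,True]"] by simp
  have duv: "pd_v (pd_u f) differentiable (at x)" if "x \<in> S" for x using dS[OF that, of "[False,True]"] by simp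
  have dvu: "pd_u (pd_v f) differentiable (at x)" if "x \<in> S" for x using dS[OF that, of "[True,False]"] by simp
  have dvv: "pd_v (pd_v f) differentiable (at x)" if "x \<in> S" for x using dS[OF that, of "[False,False]"] by simp
  have c_uv: "continuous_on S (pd_v (pd_u f))"
    using dS_on[of "[False,True]"] by (simp add: differentiable_imp_continuous_on)
  have c_vu: "continuous_on S (pd_u (pd_v f))"
    using dS_on[of "[True,False]"] by (simp add: differentiable_imp_continuous_on)
  have sym: "pd_u (pd_v f) x = pd_v (pd_u f) x" if "x \<in> S" for x
  proof -
    obtain x0 y0 where x: "x = (x0,y0)" by (cases x)
    show ?thesis unfolding x
      by (rule schwarz[OF oS _ d0 du dv c_uv c_vu, symmetric]) (use that x in auto)
  qed
  define U where "U = pd_u f (a,b)"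
  define Auu where "Auu = pd_u (pd_u f) (a,b)"
  define Buv where "Buv = pd_v (pd_u f) (a,b)"
  define Cvv where "Cvv = pd_v (pd_v f) (a,b)"
  define T2 where "T2 = pd_v (pd_v (pd_u f)) (a,b)"
  have V0: "pd_v f (a,b) = 0" using \<open>pd_v f q = 0\<close> q by simp
  have Buv': "pd_u (pd_v f) (a,b) = Buv" unfolding Buv_def using sym[OF qS] .
  have T2': "pd_v (pd_u (pd_v f)) (a,b) = T2"
    unfolding T2_def by (rule pd_v_local1[OF oS qS sym duv[OF qS]])
  have FD: "frechet_derivative f (at q) X = fst X *\<^sub>R U" for X
    using frechet_pd[OF d0[OF \<open>q \<in> S\<close>], of X] \<open>pd_v f q = 0\<close> q by (simp add: U_def)
  have Epos: "U \<bullet> U > 0" using \<open>pd_u f q \<noteq> 0\<close> q by (simp add: U_def)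
  have core: "axial_curvature f q =
    (((U \<bullet> Auu) * (U \<bullet> Cvv) - (U \<bullet> U) * (Auu \<bullet> Cvv)) * ((U \<bullet> Cvv)\<^sup>2 - (U \<bullet> U) * (Cvv \<bullet> Cvv))
     - ((Buv \<bullet> U) * (U \<bullet> Cvv) - (U \<bullet> U) * (Buv \<bullet> Cvv))\<^sup>2)
    / ((U \<bullet> U) * ((U \<bullet> U) * (Cvv \<bullet> Cvv) - (U \<bullet> Cvv)\<^sup>2)) powr (3/2)"
    by (rule core[OF Epos FD _ _ _ shape]) (simp_all add: q Auu_def Buv_def Cvv_def)
  have Eq: "E q = U \<bullet> U" by (simp add: E_def q U_def)
  have Eu: "pd_u E q = Auu \<bullet> U + U \<bullet> Auu"
    unfolding E_def q using pd_u_inner[OF du[OF qS] du[OF qS]] by (simp add: U_def Auu_def)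
  have Ev: "pd_v E q = Buv \<bullet> U + U \<bullet> Buv"
    unfolding E_def q using pd_v_inner[OF du[OF qS] du[OF qS]] by (simp add: U_def Buv_def)
  have Fv: "pd_v F q = U \<bullet> Cvv"
    unfolding F_def q using pd_v_inner[OF du[OF qS] dv[OF qS]] by (simp add: U_def Cvv_def V0)
  have Fuv: "pd_v (pd_u F) q = Auu \<bullet> Cvv + Buv \<bullet> Buv + U \<bullet> T2"
  proof -
    have "pd_v (pd_u F) (a,b) = (pd_v (pd_u (pd_u f)) (a,b) \<bullet> pd_v f (a,b) + pd_u (pd_u f) (a,b) \<bullet> pd_v (pd_v f) (a,b))
      + (pd_v (pd_u f) (a,b) \<bullet> pd_u (pd_v f) (a,b) + pd_u f (a,b) \<bullet> pd_v (pd_u (pd_v f)) (a,b))"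
    proof (rule pd_v_local2[OF oS qS _ duu[OF qS] dv[OF qS] du[OF qS] dvu[OF qS]])
      fix x assume "x \<in> S"
      obtain x0 y0 where x: "x = (x0,y0)" by (cases x)
      show "pd_u F x = pd_u (pd_u f) x \<bullet> pd_v f x + pd_u f x \<bullet> pd_u (pd_v f) x"
        unfolding F_def x by (rule pd_u_inner) (use du dv \<open>x \<in> S\<close> x in auto)
    qed
    then show ?thesis by (simp add: q V0 Buv' T2' Auu_def Cvv_def Buv_def U_def)
  qed
  have Evv: "pd_v (pd_v E) q = (T2 \<bullet> U + Buv \<bullet> Buv) + (Buv \<bullet> Buv + U \<bullet> T2)"
  proof -
    have "pd_v (pd_v E) (a,b) = (pd_v (pd_v (pd_u f)) (a,b) \<bullet> pd_u f (a,b) + pd_v (pd_u f) (a,b) \<bullet> pd_v (pd_u f) (a,b))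
      + (pd_v (pd_u f) (a,b) \<bullet> pd_v (pd_u f) (a,b) + pd_u f (a,b) \<bullet> pd_v (pd_v (pd_u f)) (a,b))"
    proof (rule pd_v_local2[OF oS qS _ duv[OF qS] du[OF qS] du[OF qS] duv[OF qS]])
      fix x assume "x \<in> S"
      obtain x0 y0 where x: "x = (x0,y0)" by (cases x)
      show "pd_v E x = pd_v (pd_u f) x \<bullet> pd_u f x + pd_u f x \<bullet> pd_v (pd_u f) x"
        unfolding E_def x by (rule pd_v_inner) (use du \<open>x \<in> S\<close> x in auto)
    qed
    then show ?thesis by (simp add: q T2_def Buv_def U_def)
  qed
  have Guv: "pd_v (pd_u G) q = Buv \<bullet> Cvv + Cvv \<bullet> Buv"
  proof -
    have "pd_v (pd_u G) (a,b) = (pd_v (pd_u (pd_v f)) (a,b) \<bullet> pd_v f (a,b) + pd_u (pd_v f) (a,b) \<bullet> pd_v (pd_v f) (a,b))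
      + (pd_v (pd_v f) (a,b) \<bullet> pd_u (pd_v f) (a,b) + pd_v f (a,b) \<bullet> pd_v (pd_u (pd_v f)) (a,b))"
    proof (rule pd_v_local2[OF oS qS _ dvu[OF qS] dv[OF qS] dv[OF qS] dvu[OF qS]])
      fix x assume "x \<in> S"
      obtain x0 y0 where x: "x = (x0,y0)" by (cases x)
      show "pd_u G x = pd_u (pd_v f) x \<bullet> pd_v f x + pd_v f x \<bullet> pd_u (pd_v f) x"
        unfolding G_def x by (rule pd_u_inner) (use dv \<open>x \<in> S\<close> x in auto)
    qed
    then show ?thesis by (simp add: q V0 Buv' Cvv_def)
  qed
  have Gvv: "pd_v (pd_v G) q = Cvv \<bullet> Cvv + Cvv \<bullet> Cvv"
  proof -
    have "pd_v (pd_v G) (a,b) = (pd_v (pd_v (pd_v f)) (a,b) \<bullet> pd_v f (a,b) + pd_v (pd_v f) (a,b) \<bullet> pd_v (pd_v f) (a,b))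
      + (pd_v (pd_v f) (a,b) \<bullet> pd_v (pd_v f) (a,b) + pd_v f (a,b) \<bullet> pd_v (pd_v (pd_v f)) (a,b))"
    proof (rule pd_v_local2[OF oS qS _ dvv[OF qS] dv[OF qS] dv[OF qS] dvv[OF qS]])
      fix x assume "x \<in> S"
      obtain x0 y0 where x: "x = (x0,y0)" by (cases x)
      show "pd_v G x = pd_v (pd_v f) x \<bullet> pd_v f x + pd_v f x \<bullet> pd_v (pd_v f) x"
        unfolding G_def x by (rule pd_v_inner) (use dv \<open>x \<in> S\<close> x in auto)
    qed
    then show ?thesis by (simp add: q V0 Cvv_def)
  qed
  have c1: "pd_u E q / 2 * pd_v F q - E q * (pd_v (pd_u F) q - pd_v (pd_v E) q / 2)
      = (U \<bullet> Auu) * (U \<bullet> Cvv) - (U \<bullet> U) * (Auu \<bullet> Cvv)"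
    unfolding Eu Fv Eq Fuv Evv by (simp add: inner_commute algebra_simps)
  have c2: "(pd_v F q)\<^sup>2 - E q * pd_v (pd_v G) q / 2 = (U \<bullet> Cvv)\<^sup>2 - (U \<bullet> U) * (Cvv \<bullet> Cvv)"
    unfolding Fv Eq Gvv by simp
  have c3: "pd_v E q / 2 * pd_v F q - E q * pd_v (pd_u G) q / 2
      = (Buv \<bullet> U) * (U \<bullet> Cvv) - (U \<bullet> U) * (Buv \<bullet> Cvv)"
    unfolding Ev Fv Eq Guv by (simp add: inner_commute)
  have c4: "E q * (E q * pd_v (pd_v G) q / 2 - (pd_v F q)\<^sup>2) = (U \<bullet> U) * ((U \<bullet> U) * (Cvv \<bullet> Cvv) - (U \<bullet> Cvv)\<^sup>2)"
    unfolding Fv Eq Gvv by simp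
  show ?thesis unfolding c1 c2 c3 c4 core ..
qed

end
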